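(* Let $\bar x\in\Phi$ be a local second-order weak sharp minimizer of problem (P) with corresponding constants $\kappa>0$ and $\delta>0$. Then for every $x\in S\cap B_\delta(\bar x)$, every $d\in C(x)$, and every $\lambda\in\mathbb{R}^m$ with $\nabla_xL(x,\lambda)=0$, one has (i) $\sigma_{\nabla g(x)(T''_\Phi(x;d))}(\lambda)\le0$; (ii) $\nabla^2_{xx}L(x,\lambda)(d,d)-\sigma_{\nabla g(x)(T^2_\Phi(x;d))+\nabla^2g(x)(d,d)}(\lambda)\ge 2\kappa\,[\mathrm{dist}(d,T_S(x))]^2$.
   Context: Standing setting: $f:\mathbb{R}^n\to\mathbb{R}$ and $g:\mathbb{R}^n\to\mathbb{R}^m$ are twice continuously differentiable, $K\subset\mathbb{R}^m$ is closed, and (P) is the problem $\min f(x)$ s.t. $g(x)\in K$. $\Phi:=\{x: g(x)\in K\}$ and $S$ is the (nonempty) set of optimal solutions of (P). $L(x,\lambda):=f(x)+\langle g(x),\lambda\rangle$. $\bar x\in\Phi$ is a local second-order weak sharp minimizer with constants $\kappa,\delta>0$ if $f(x)\ge f(\bar x)+\kappa[\mathrm{dist}(x,S)]^2$ for all $x\in\Phi\cap B_\delta(\bar x)$. For a closed set $A$ and $\bar x\in A$: $T_A(\bar x):=\{d:\exists t_k\downarrow0,d_k\to d,\ \bar x+t_kd_k\in A\}$; for $d\in T_A(\bar x)$, $T^2_A(\bar x;d):=\{w:\exists t_k\downarrow0,w_k\to w,\ \bar x+t_kd+\tfrac12t_k^2w_k\in A\}$ and $T''_A(\bar x;d):=\{w:\exists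 (t_k,r_k)\downarrow(0,0),\ t_k/r_k\to0,\ w_k\to w,\ \bar x+t_kd+\tfrac12t_kr_kw_k\in A\}$. $C(x):=\{d:\nabla g(x)d\in T_K(g(x)),\ \nabla f(x)d\le0\}$. $\sigma_A(\lambda):=\sup_{u\in A}\langle\lambda,u\rangle$ ($-\infty$ if $A=\emptyset$). $\nabla^2g(x)(d,d):=(d^T\nabla^2g_i(x)d)_{i=1}^m$, $\nabla g(x)(A):=\{\nabla g(x)u:u\in A\}$. *)

theory Defs
  imports "HOL-Analysis.Analysis"
begin

definition tangent_cone :: "'a::real_normed_vector set \<Rightarrow> 'a \<Rightarrow> 'a set" where
  "tangent_cone A x = {d. \<exists>t dk. (\<forall>k. t k > 0) \<and> t \<longlonglongrightarrow> 0 \<and> dk \<longlonglongrightarrow> d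
      \<and> (\<forall>k. x + t k *\<^sub>R dk k \<in> A)}"

definition second_tangent_set :: "'a::real_normed_vector set \<Rightarrow> 'a \<Rightarrow> 'a \<Rightarrow> 'a set" where
  "second_tangent_set A x d = {w. \<exists>t wk. (\<forall>k. t k > 0) \<and> t \<longlonglongrightarrow> 0 \<and> wk \<longlonglongrightarrow> w
      \<and> (\<forall>k. x + t k *\<^sub>R d + (1/2 * (t k)\<^sup>2) *\<^sub>R wk k \<in> A)}"

definition asymp_second_tangent_cone :: "'a::real_normed_vector set \<Rightarrow> 'a \<Rightarrow> 'a \<Rightarrow> 'a set" where
  "asymp_second_tangent_cone A x d = {w. \<exists>t r wk. (\<forall>k. t k > 0) \<and> (\<forall>k. r k > 0)
      \<and> t \<longlonglongrightarrow> 0 \<and> r \<longlonglongrightarrow> 0 \<and> (\<lambda>k. t k / r k) \<longlonglongrightarrow> 0 \<and> wk \<longlonglongrightarrow> w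
      \<and> (\<forall>k. x + t k *\<^sub>R d + (1/2 * t k * r k) *\<^sub>R wk k \<in> A)}"

text \<open>Support function, with value -\<infinity> on the empty set.\<close>
definition support_fun :: "'a::real_inner set \<Rightarrow> 'a \<Rightarrow> ereal" where
  "support_fun A l = (SUP u\<in>A. ereal (l \<bullet> u))"

definition so_weak_sharp_min ::
  "('n \<Rightarrow> real) \<Rightarrow> 'n::real_normed_vector set \<Rightarrow> 'n set \<Rightarrow> 'n \<Rightarrow> real \<Rightarrow> real \<Rightarrow> bool" where
  "so_weak_sharp_min f Phi S xb \<kappa> \<delta> \<longleftrightarrow> xb \<in> Phi \<and> \<kappa> > 0 \<and> \<delta> > 0 \<and>
     (\<forall>x \<in> Phi \<inter> ball xb \<delta>. f x \<ge> f xb + \<kappa> * (infdist x S)\<^sup>2)"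

end

theory Submission imports Defs begin

lemma taylor2:
  fixes f :: "'a::real_normed_vector \<Rightarrow> real"
    and Df :: "'a \<Rightarrow> ('a \<Rightarrow>\<^sub>L real)"
    and D2f :: "'a \<Rightarrow> ('a \<Rightarrow>\<^sub>L ('a \<Rightarrow>\<^sub>L real))"
  assumes f_D: "\<And>x. (f has_derivative blinfun_apply (Df x)) (at x)"
    and f_D2: "\<And>x. (Df has_derivative blinfun_apply (D2f x)) (at x)"
    and f_C2: "continuous_on UNIV D2f"
    and e: "e > 0"
  shows "\<exists>\<eta>>0. \<forall>h. norm h < \<eta> \<longrightarrow>
     \<bar>f (x + h) - f x - Df x h - 1/2 * D2f x h h\<bar> \<le> e * (norm h)\<^sup>2"
proof -
  have "isCont D2f x" using f_C2 by (simp add: continuous_on_eq_continuous_at)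
  then obtain \<eta> where \<eta>: "\<eta> > 0" and H: "\<And>y. dist y x < \<eta> \<Longrightarrow> dist (D2f y) (D2f x) < 2*e"
    using e unfolding continuous_at_eps_delta by (metis mult_pos_pos zero_less_numeral)
  show ?thesis
  proof (intro exI[of _ \<eta>] conjI allI impI \<eta>)
    fix h :: 'a assume hn: "norm h < \<eta>"
    define dd where "dd = (\<lambda>m::nat. \<lambda>s::real. if m = 0 then f (x + s *\<^sub>R h)
        else if m = 1 then Df (x + s *\<^sub>R h) h else D2f (x + s *\<^sub>R h) h h)"
    have d0: "DERIV (dd 0) s :> dd 1 s" for s
    proof -
      have "((\<lambda>s. f (x + s *\<^sub>R h)) has_derivative (\<lambda>u. Df (x + s *\<^sub>R h) (u *\<^sub>R h))) (at s)"
        by (rule has_derivative_compose[OF _ f_D]) (auto intro!: derivative_eq_intros)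
      then show ?thesis unfolding dd_def has_field_derivative_def
        by (simp add: blinfun.scaleR_right mult_commute_abs)
    qed
    have d1: "DERIV (dd 1) s :> dd 2 s" for s
    proof -
      have "((\<lambda>s. Df (x + s *\<^sub>R h)) has_derivative (\<lambda>u. D2f (x + s *\<^sub>R h) (u *\<^sub>R h))) (at s)"
        by (rule has_derivative_compose[OF _ f_D2]) (auto intro!: derivative_eq_intros)
      then have "((\<lambda>s. blinfun_apply (Df (x + s *\<^sub>R h)) h) has_derivative (\<lambda>u. blinfun_apply (D2f (x + s *\<^sub>R h) (u *\<^sub>R h)) h)) (at s)"
        by (auto intro!: derivative_eq_intros)
      then show ?thesis unfolding dd_def has_field_derivative_def
        by (simp add: blinfun.scaleR_right blinfun.scaleR_left mult_commute_abs)
    qed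
    have "\<exists>s::real. 0 < s \<and> s < 1 \<and>
      dd 0 1 = sum (\<lambda>m. (dd m 0 / fact m) * 1 ^ m) {..<2} + (dd 2 s / fact 2) * 1 ^ 2"
      apply (rule Maclaurin[where f="dd 0"])
        apply simp apply simp apply simp
      using d0 d1 by (metis One_nat_def Suc_1 less_2_cases)
    then obtain s :: real where s: "0 < s" "s < 1" and
      eq: "f (x + h) = f x + Df x h + 1/2 * D2f (x + s *\<^sub>R h) h h"
      by (auto simp: dd_def numeral_2_eq_2 eval_nat_numeral)
    have "s * norm h \<le> 1 * norm h" using s by (intro mult_right_mono) auto
    then have "dist (x + s *\<^sub>R h) x < \<eta>" using s hn by (simp add: dist_norm)
    then have nd: "norm (D2f (x + s *\<^sub>R h) - D2f x) \<le> 2*e"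
      using H[of "x + s *\<^sub>R h"] by (simp add: dist_norm less_imp_le)
    have "\<bar>D2f (x + s *\<^sub>R h) h h - D2f x h h\<bar> = \<bar>(D2f (x + s *\<^sub>R h) - D2f x) h h\<bar>"
      by (simp add: blinfun.diff_left)
    also have "\<dots> \<le> norm ((D2f (x + s *\<^sub>R h) - D2f x) h) * norm h"
      using norm_blinfun by (metis real_norm_def)
    also have "\<dots> \<le> norm (D2f (x + s *\<^sub>R h) - D2f x) * norm h * norm h"
      by (simp add: mult_right_mono norm_blinfun)
    also have "\<dots> \<le> 2*e * norm h * norm h"
      by (simp add: mult_right_mono nd)
    finally show "\<bar>f (x + h) - f x - Df x h - 1/2 * D2f x h h\<bar> \<le> e * (norm h)\<^sup>2"
      unfolding eq by (simp add: power2_eq_square abs_if split: if_splits) 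
  qed
qed


lemma taylor_seq:
  fixes f :: "'a::real_normed_vector \<Rightarrow> real"
    and Df :: "'a \<Rightarrow> ('a \<Rightarrow>\<^sub>L real)"
    and D2f :: "'a \<Rightarrow> ('a \<Rightarrow>\<^sub>L ('a \<Rightarrow>\<^sub>L real))"
  assumes f_D: "\<And>x. (f has_derivative blinfun_apply (Df x)) (at x)"
    and f_D2: "\<And>x. (Df has_derivative blinfun_apply (D2f x)) (at x)"
    and f_C2: "continuous_on UNIV D2f"
    and t0: "t \<longlonglongrightarrow> 0" and tpos: "\<And>k. t k > 0" and aa: "a \<longlonglongrightarrow> a0"
  shows "(\<lambda>k. (f (x + t k *\<^sub>R a k) - f x - t k * Df x (a k)) / (t k)\<^sup>2) \<longlonglongrightarrow> 1/2 * D2f x a0 a0"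
proof -
  define R where "R k = f (x + t k *\<^sub>R a k) - f x - Df x (t k *\<^sub>R a k)
      - 1/2 * D2f x (t k *\<^sub>R a k) (t k *\<^sub>R a k)" for k
  have eq: "(f (x + t k *\<^sub>R a k) - f x - t k * Df x (a k)) / (t k)\<^sup>2
      = R k / (t k)\<^sup>2 + 1/2 * D2f x (a k) (a k)" for k
    using tpos[of k] unfolding R_def
    by (simp add: blinfun.scaleR_right blinfun.scaleR_left field_simps power2_eq_square)
  obtain B where B: "B > 0" "\<And>k. norm (a k) \<le> B"
    using convergent_imp_Bseq[of a] aa by (auto simp: convergent_def BseqE elim!: BseqE)
  have ta: "(\<lambda>k. t k *\<^sub>R a k) \<longlonglongrightarrow> 0"
    using tendsto_scaleR[OF t0 aa] by simp
  have R0: "(\<lambda>k. R k / (t k)\<^sup>2) \<longlonglongrightarrow> 0"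
    unfolding tendsto_iff
  proof (intro allI impI)
    fix e :: real assume e: "e > 0"
    define e' where "e' = e / (2 * B\<^sup>2)"
    have e': "e' > 0" using e B by (simp add: e'_def)
    obtain \<eta> where \<eta>: "\<eta> > 0" and H: "\<And>h. norm h < \<eta> \<Longrightarrow>
        \<bar>f (x + h) - f x - Df x h - 1/2 * D2f x h h\<bar> \<le> e' * (norm h)\<^sup>2"
      using taylor2[OF f_D f_D2 f_C2 e', of x] by blast
    have "\<forall>\<^sub>F k in sequentially. norm (t k *\<^sub>R a k) < \<eta>"
      using ta \<eta> by (simp add: tendsto_iff dist_norm)
    then show "\<forall>\<^sub>F k in sequentially. dist (R k / (t k)\<^sup>2) 0 < e"
    proof (rule eventually_mono)
      fix k assume nk: "norm (t k *\<^sub>R a k) < \<eta>"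
      have "\<bar>R k\<bar> \<le> e' * (norm (t k *\<^sub>R a k))\<^sup>2"
        using H[OF nk] unfolding R_def by simp
      also have "\<dots> = e' * (t k)\<^sup>2 * (norm (a k))\<^sup>2"
        using tpos[of k] by (simp add: power_mult_distrib)
      also have "\<dots> \<le> e' * (t k)\<^sup>2 * B\<^sup>2"
        using B(2)[of k] e' by (intro mult_left_mono power_mono) auto
      finally have "\<bar>R k\<bar> / (t k)\<^sup>2 \<le> e' * B\<^sup>2"
        using tpos[of k] by (simp add: divide_le_eq mult.commute mult.left_commute)
      also have "\<dots> < e" using e B by (simp add: e'_def)
      finally show "dist (R k / (t k)\<^sup>2) 0 < e" by (simp add: abs_divide)
    qed
  qed
  have "(\<lambda>k. R k / (t k)\<^sup>2 + 1/2 * D2f x (a k) (a k)) \<longlonglongrightarrow> 0 + 1/2 * D2f x a0 a0"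
    by (intro tendsto_intros R0 aa)
  then show ?thesis unfolding eq by simp
qed


lemma first_order:
  fixes f :: "'a::real_normed_vector \<Rightarrow> real"
    and Df :: "'a \<Rightarrow> ('a \<Rightarrow>\<^sub>L real)"
    and D2f :: "'a \<Rightarrow> ('a \<Rightarrow>\<^sub>L ('a \<Rightarrow>\<^sub>L real))"
  assumes f_D: "\<And>x. (f has_derivative blinfun_apply (Df x)) (at x)"
    and f_D2: "\<And>x. (Df has_derivative blinfun_apply (D2f x)) (at x)"
    and f_C2: "continuous_on UNIV D2f"
    and t0: "t \<longlonglongrightarrow> 0" and tpos: "\<And>k. t k > 0" and vv: "v \<longlonglongrightarrow> v0"
    and ge: "\<And>k. f (x + t k *\<^sub>R v k) \<ge> f x"
  shows "Df x v0 \<ge> 0"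
proof -
  define Q where "Q k = (f (x + t k *\<^sub>R v k) - f x - t k * Df x (v k)) / (t k)\<^sup>2" for k
  have Q: "Q \<longlonglongrightarrow> 1/2 * D2f x v0 v0"
    unfolding Q_def by (rule taylor_seq[OF f_D f_D2 f_C2 t0 tpos vv])
  have "(\<lambda>k. Df x (v k) + t k * Q k) \<longlonglongrightarrow> Df x v0 + 0 * (1/2 * D2f x v0 v0)"
    by (intro tendsto_intros Q t0 vv)
  moreover have "0 \<le> Df x (v k) + t k * Q k" for k
  proof -
    have "t k * (Df x (v k) + t k * Q k) = f (x + t k *\<^sub>R v k) - f x"
      using tpos[of k] by (simp add: Q_def field_simps power2_eq_square)
    then have "0 \<le> t k * (Df x (v k) + t k * Q k)" using ge[of k] by simp
    then show ?thesis using tpos[of k] by (simp add: zero_le_mult_iff)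
  qed
  ultimately show ?thesis by (intro LIMSEQ_le_const) auto
qed

lemma tangent_lim:
  fixes S :: "'a::{real_normed_vector,heine_borel} set"
  assumes t0: "t \<longlonglongrightarrow> 0" and tpos: "\<And>k. t k > 0" and vv: "v \<longlonglongrightarrow> d"
    and ev: "\<forall>\<^sub>F k in sequentially. \<exists>s\<in>S. norm (x + t k *\<^sub>R v k - s) \<le> \<rho> * t k"
  shows "infdist d (tangent_cone S x) \<le> \<rho>"
proof -
  obtain N where N: "\<And>k. k \<ge> N \<Longrightarrow> \<exists>s\<in>S. norm (x + t k *\<^sub>R v k - s) \<le> \<rho> * t k"
    using ev unfolding eventually_sequentially by blast
  have "\<forall>k. \<exists>s. s \<in> S \<and> norm (x + t (k+N) *\<^sub>R v (k+N) - s) \<le> \<rho> * t (k+N)"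
    using N le_add2 by blast
  then obtain s where s0: "\<forall>k. s k \<in> S \<and> norm (x + t (k+N) *\<^sub>R v (k+N) - s k) \<le> \<rho> * t (k+N)"
    by (metis choice)
  then have s: "\<And>k. s k \<in> S" "\<And>k. norm (x + t (k+N) *\<^sub>R v (k+N) - s k) \<le> \<rho> * t (k+N)"
    by auto
  define u where "u k = (1 / t (k+N)) *\<^sub>R (s k - x)" for k
  have su: "s k = x + t (k+N) *\<^sub>R u k" for k
    using tpos[of "k+N"] by (simp add: u_def)
  have vu: "norm (v (k+N) - u k) \<le> \<rho>" for k
  proof -
    have "x + t (k+N) *\<^sub>R v (k+N) - s k = t (k+N) *\<^sub>R (v (k+N) - u k)"
      by (simp add: su algebra_simps)
    then have "t (k+N) * norm (v (k+N) - u k) \<le> \<rho> * t (k+N)"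
      using s(2)[of k] tpos[of "k+N"] by simp
    then show ?thesis using tpos[of "k+N"] by (simp add: mult.commute)
  qed
  obtain B where B: "\<And>k. norm (v k) \<le> B"
    using convergent_imp_Bseq[of v] vv by (auto simp: convergent_def elim!: BseqE)
  have ub: "u k \<in> cball 0 (B + \<rho>)" for k
  proof -
    have "norm (u k) \<le> norm (v (k+N)) + norm (v (k+N) - u k)"
      by (metis add.commute diff_add_cancel norm_triangle_ineq4 order.refl norm_minus_commute
          norm_triangle_ineq2 add_le_cancel_right diff_le_eq)
    then show ?thesis using B[of "k+N"] vu[of k] by simp
  qed
  obtain u0 r where r: "strict_mono (r::nat\<Rightarrow>nat)" "(u \<circ> r) \<longlonglongrightarrow> u0"
    using seq_compactE[OF compact_imp_seq_compact[OF compact_cball], of u] ub by blast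
  have tr: "(\<lambda>k. t (r k + N)) \<longlonglongrightarrow> 0"
  proof -
    have "(\<lambda>k. t (k + N)) \<longlonglongrightarrow> 0" using t0 by (rule LIMSEQ_ignore_initial_segment)
    from LIMSEQ_subseq_LIMSEQ[OF this r(1)] show ?thesis by (simp add: o_def)
  qed
  have vr: "(\<lambda>k. v (r k + N)) \<longlonglongrightarrow> d"
  proof -
    have "(\<lambda>k. v (k + N)) \<longlonglongrightarrow> d" using vv by (rule LIMSEQ_ignore_initial_segment)
    from LIMSEQ_subseq_LIMSEQ[OF this r(1)] show ?thesis by (simp add: o_def)
  qed
  have "u0 \<in> tangent_cone S x"
    unfolding tangent_cone_def
    using tr r(2) s(1) tpos by (auto intro!: exI[of _ "\<lambda>k. t (r k + N)"] exI[of _ "u \<circ> r"] simp: su[symmetric])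
  then have "infdist d (tangent_cone S x) \<le> dist d u0" by (rule infdist_le)
  also have "\<dots> \<le> \<rho>"
  proof -
    have "(\<lambda>k. norm (v (r k + N) - u (r k))) \<longlonglongrightarrow> norm (d - u0)"
      using r(2) vr by (intro tendsto_intros) (simp_all add: o_def)
    then show ?thesis using vu by (simp add: dist_norm) (rule LIMSEQ_le_const2, auto)
  qed
  finally show ?thesis .
qed


lemma infdist_lessE:
  assumes "A \<noteq> {}" "infdist y A < e"
  shows "\<exists>a\<in>A. dist y a < e"
proof -
  have lt: "(INF a\<in>A. dist y a) < e" using assms by (simp add: infdist_notempty)
  have bd: "bdd_below ((\<lambda>a. dist y a) ` A)" by (rule bdd_belowI[of _ 0]) auto
  show ?thesis using iffD1[OF cINF_less_iff[OF assms(1) bd] lt] .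
qed

theorem theorem3p3:
  fixes f :: "real^'n \<Rightarrow> real"
    and Df :: "real^'n \<Rightarrow> ((real^'n) \<Rightarrow>\<^sub>L real)"
    and D2f :: "real^'n \<Rightarrow> ((real^'n) \<Rightarrow>\<^sub>L ((real^'n) \<Rightarrow>\<^sub>L real))"
    and g :: "real^'n \<Rightarrow> real^'m"
    and Dg :: "real^'n \<Rightarrow> ((real^'n) \<Rightarrow>\<^sub>L (real^'m))"
    and D2g :: "real^'n \<Rightarrow> ((real^'n) \<Rightarrow>\<^sub>L ((real^'n) \<Rightarrow>\<^sub>L (real^'m)))"
    and K :: "(real^'m) set" and Phi S :: "(real^'n) set"
    and xb :: "real^'n" and \<kappa> \<delta> :: real
  assumes f_D: "\<And>x. (f has_derivative blinfun_apply (Df x)) (at x)"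
    and f_D2: "\<And>x. (Df has_derivative blinfun_apply (D2f x)) (at x)"
    and f_C2: "continuous_on UNIV D2f"
    and g_D: "\<And>x. (g has_derivative blinfun_apply (Dg x)) (at x)"
    and g_D2: "\<And>x. (Dg has_derivative blinfun_apply (D2g x)) (at x)"
    and g_C2: "continuous_on UNIV D2g"
    and K_closed: "closed K"
    and Phi_def: "Phi = {x. g x \<in> K}"
    and S_def: "S = {x \<in> Phi. \<forall>y \<in> Phi. f x \<le> f y}"
    and S_ne: "S \<noteq> {}"
    and wsm: "so_weak_sharp_min f Phi S xb \<kappa> \<delta>"
  shows "\<forall>x \<in> S \<inter> ball xb \<delta>. \<forall>d. \<forall>l :: real^'m.
           (Dg x d \<in> tangent_cone K (g x) \<and> Df x d \<le> 0) \<longrightarrow>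
           (\<forall>v. Df x v + Dg x v \<bullet> l = 0) \<longrightarrow>
           support_fun (blinfun_apply (Dg x) ` asymp_second_tangent_cone Phi x d) l \<le> 0
         \<and> ereal (D2f x d d + D2g x d d \<bullet> l)
             - support_fun ((\<lambda>w. Dg x w + D2g x d d) ` second_tangent_set Phi x d) l
           \<ge> ereal (2 * \<kappa> * (infdist d (tangent_cone S x))\<^sup>2)"
proof (intro ballI allI impI conjI)
  fix x d and l :: "real^'m"
  assume xS: "x \<in> S \<inter> ball xb \<delta>"
    and C: "Dg x d \<in> tangent_cone K (g x) \<and> Df x d \<le> 0"
    and lag: "\<forall>v. Df x v + Dg x v \<bullet> l = 0"
  have fmin: "\<And>y. y \<in> Phi \<Longrightarrow> f x \<le> f y" using xS S_def by auto
  have kap: "\<kappa> > 0" and sharp: "\<And>y. y \<in> Phi \<Longrightarrow> y \<in> ball xb \<delta> \<Longrightarrow> f y \<ge> f xb + \<kappa> * (infdist y S)\<^sup>2"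
    using wsm unfolding so_weak_sharp_min_def by auto
  have xbS: "f xb = f x"
  proof -
    have "xb \<in> Phi" using wsm unfolding so_weak_sharp_min_def by auto
    moreover have "f x \<ge> f xb + \<kappa> * (infdist x S)\<^sup>2" using sharp[of x] xS S_def by auto
    moreover have "\<kappa> * (infdist x S)\<^sup>2 \<ge> 0" using kap by simp
    ultimately have "f xb \<le> f x" by linarith
    moreover have "f x \<le> f xb" using \<open>xb \<in> Phi\<close> fmin by auto
    ultimately show ?thesis by simp
  qed
  have lagw: "l \<bullet> Dg x w = - Df x w" for w using lag[rule_format, of w]
    by (simp add: inner_commute)
  show "support_fun (blinfun_apply (Dg x) ` asymp_second_tangent_cone Phi x d) l \<le> 0"
    unfolding support_fun_def
  proof (rule SUP_least)
    fix u assume "u \<in> blinfun_apply (Dg x) ` asymp_second_tangent_cone Phi x d"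
    then obtain w t r wk where u: "u = Dg x w" and tpos: "\<And>k. t k > 0" and rpos: "\<And>k. r k > 0"
      and t0: "t \<longlonglongrightarrow> 0" and r0: "r \<longlonglongrightarrow> 0" and tr0: "(\<lambda>k. t k / r k) \<longlonglongrightarrow> 0"
      and ww: "wk \<longlonglongrightarrow> w" and inP: "\<And>k. x + t k *\<^sub>R d + (1/2 * t k * r k) *\<^sub>R wk k \<in> Phi"
      unfolding asymp_second_tangent_cone_def by blast
    define v where "v k = d + (1/2 * r k) *\<^sub>R wk k" for k
    have pv: "x + t k *\<^sub>R v k = x + t k *\<^sub>R d + (1/2 * t k * r k) *\<^sub>R wk k" for k
      by (simp add: v_def algebra_simps)
    have vv: "v \<longlonglongrightarrow> d"
    proof -
      have "v \<longlonglongrightarrow> d + (1/2 * 0) *\<^sub>R w" unfolding v_def by (intro tendsto_intros r0 ww)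
      then show ?thesis by simp
    qed
    have ge: "f (x + t k *\<^sub>R v k) \<ge> f x" for k using fmin inP pv by metis
    have "Df x d \<ge> 0" by (rule first_order[OF f_D f_D2 f_C2 t0 tpos vv ge])
    then have Dd: "Df x d = 0" using C by simp
    define Q where "Q k = (f (x + t k *\<^sub>R v k) - f x - t k * Df x (v k)) / (t k)\<^sup>2" for k
    have Q: "Q \<longlonglongrightarrow> 1/2 * D2f x d d"
      unfolding Q_def by (rule taylor_seq[OF f_D f_D2 f_C2 t0 tpos vv])
    have "(\<lambda>k. Df x (wk k) + 2 * (t k / r k) * Q k) \<longlonglongrightarrow> Df x w + 2 * 0 * (1/2 * D2f x d d)"
      by (intro tendsto_intros Q tr0 ww)
    moreover have "0 \<le> Df x (wk k) + 2 * (t k / r k) * Q k" for k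
    proof -
      have Dv: "Df x (v k) = 1/2 * r k * Df x (wk k)"
        by (simp add: v_def Dd blinfun.add_right blinfun.scaleR_right)
      have Qk: "(t k)\<^sup>2 * Q k = f (x + t k *\<^sub>R v k) - f x - t k * Df x (v k)"
        using tpos[of k] by (simp add: Q_def)
      have "(1/2 * t k * r k) * (Df x (wk k) + 2 * (t k / r k) * Q k)
          = t k * (1/2 * r k * Df x (wk k)) + (t k)\<^sup>2 * Q k"
        using rpos[of k] by (simp add: field_simps power2_eq_square)
      then have "(1/2 * t k * r k) * (Df x (wk k) + 2 * (t k / r k) * Q k) = f (x + t k *\<^sub>R v k) - f x"
        using Dv Qk by simp
      then have "0 \<le> (1/2 * t k * r k) * (Df x (wk k) + 2 * (t k / r k) * Q k)" using ge[of k] by simp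
      then show ?thesis using mult_pos_pos[OF tpos[of k] rpos[of k]] by (simp add: zero_le_mult_iff)
    qed
    ultimately have "Df x w \<ge> 0" by (intro LIMSEQ_le_const) auto
    then show "ereal (l \<bullet> u) \<le> 0" using lagw u by simp
  qed
  define c where "c = infdist d (tangent_cone S x)"
  have claim: "2 * \<kappa> * c\<^sup>2 \<le> D2f x d d + Df x w" if w: "w \<in> second_tangent_set Phi x d" for w
  proof -
    obtain t wk where tpos: "\<And>k. t k > 0" and t0: "t \<longlonglongrightarrow> 0"
      and ww: "wk \<longlonglongrightarrow> w" and inP: "\<And>k. x + t k *\<^sub>R d + (1/2 * (t k)\<^sup>2) *\<^sub>R wk k \<in> Phi"
      using w unfolding second_tangent_set_def by blast
    define v where "v k = d + (1/2 * t k) *\<^sub>R wk k" for k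
    define p where "p k = x + t k *\<^sub>R v k" for k
    have pv: "p k = x + t k *\<^sub>R d + (1/2 * (t k)\<^sup>2) *\<^sub>R wk k" for k
      by (simp add: p_def v_def algebra_simps power2_eq_square)
    have pP: "p k \<in> Phi" for k using inP pv by metis
    have vv: "v \<longlonglongrightarrow> d"
    proof -
      have "v \<longlonglongrightarrow> d + (1/2 * 0) *\<^sub>R w" unfolding v_def by (intro tendsto_intros t0 ww)
      then show ?thesis by simp
    qed
    have ge: "f (x + t k *\<^sub>R v k) \<ge> f x" for k using fmin pP p_def by metis
    have "Df x d \<ge> 0" by (rule first_order[OF f_D f_D2 f_C2 t0 tpos vv ge])
    then have Dd: "Df x d = 0" using C by simp
    define Q where "Q k = (f (x + t k *\<^sub>R v k) - f x - t k * Df x (v k)) / (t k)\<^sup>2" for k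
    have Q: "Q \<longlonglongrightarrow> 1/2 * D2f x d d"
      unfolding Q_def by (rule taylor_seq[OF f_D f_D2 f_C2 t0 tpos vv])
    define A where "A k = (f (p k) - f x) / (t k)\<^sup>2" for k
    have Aeq: "A k = 1/2 * Df x (wk k) + Q k" for k
    proof -
      have Dv: "Df x (v k) = 1/2 * t k * Df x (wk k)"
        by (simp add: v_def Dd blinfun.add_right blinfun.scaleR_right)
      have "A k = (f (x + t k *\<^sub>R v k) - f x - t k * Df x (v k)) / (t k)\<^sup>2 + t k * Df x (v k) / (t k)\<^sup>2"
        by (simp add: A_def p_def diff_divide_distrib add_divide_distrib)
      also have "t k * Df x (v k) / (t k)\<^sup>2 = 1/2 * Df x (wk k)"
        using tpos[of k] unfolding Dv by (simp add: power2_eq_square)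
      finally show ?thesis by (simp add: Q_def)
    qed
    define L where "L = 1/2 * Df x w + 1/2 * D2f x d d"
    have AL: "A \<longlonglongrightarrow> L"
      unfolding Aeq[abs_def] L_def by (intro tendsto_intros Q ww)
    have A0: "0 \<le> A k" for k using ge[of k] tpos[of k] by (simp add: A_def p_def)
    have L0: "0 \<le> L" using AL A0 by (intro LIMSEQ_le_const) auto
    have px: "p \<longlonglongrightarrow> x"
    proof -
      have "p \<longlonglongrightarrow> x + 0 *\<^sub>R d" unfolding p_def by (intro tendsto_intros t0 vv)
      then show ?thesis by simp
    qed
    have evball: "\<forall>\<^sub>F k in sequentially. p k \<in> ball xb \<delta>"
      using px xS by (intro topological_tendstoD) auto
    have evA: "\<forall>\<^sub>F k in sequentially. \<kappa> * (infdist (p k) S)\<^sup>2 / (t k)\<^sup>2 \<le> A k"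
      using evball
    proof (rule eventually_mono)
      fix k assume "p k \<in> ball xb \<delta>"
      then have "f (p k) \<ge> f x + \<kappa> * (infdist (p k) S)\<^sup>2" using sharp pP xbS by metis
      then show "\<kappa> * (infdist (p k) S)\<^sup>2 / (t k)\<^sup>2 \<le> A k"
        unfolding A_def using tpos[of k] by (simp add: divide_right_mono)
    qed
    have "\<kappa> * c\<^sup>2 \<le> L"
    proof (rule field_le_epsilon)
      fix e :: real assume e: "e > 0"
      define \<rho> where "\<rho> = sqrt ((L + e) / \<kappa>)"
      have \<rho>0: "\<rho> > 0" using L0 e kap by (simp add: \<rho>_def)
      have \<rho>2: "\<kappa> * \<rho>\<^sup>2 = L + e" using L0 e kap by (simp add: \<rho>_def)
      have "\<forall>\<^sub>F k in sequentially. A k < L + e" using AL e by (intro order_tendstoD) auto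
      with evA have "\<forall>\<^sub>F k in sequentially. \<exists>s\<in>S. norm (x + t k *\<^sub>R v k - s) \<le> \<rho> * t k"
      proof eventually_elim
        case (elim k)
        then have "\<kappa> * (infdist (p k) S)\<^sup>2 / (t k)\<^sup>2 < \<kappa> * \<rho>\<^sup>2" using \<rho>2 by simp
        then have "(infdist (p k) S)\<^sup>2 < (\<rho> * t k)\<^sup>2" using kap tpos[of k]
          by (simp add: divide_less_eq power_mult_distrib mult.commute mult.left_commute)
        then have "infdist (p k) S < \<rho> * t k"
          using \<rho>0 tpos[of k] by (meson power_less_imp_less_base mult_pos_pos less_imp_le)
        then obtain s where "s \<in> S" "dist (p k) s < \<rho> * t k" using infdist_lessE[OF S_ne] by blast
        then show ?case by (auto simp: p_def dist_norm intro!: bexI[of _ s])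
      qed
      then have "c \<le> \<rho>" unfolding c_def by (rule tangent_lim[OF t0 tpos vv])
      moreover have "0 \<le> c" by (simp add: c_def infdist_nonneg)
      ultimately have "c\<^sup>2 \<le> \<rho>\<^sup>2" by (intro power_mono) auto
      then have "\<kappa> * c\<^sup>2 \<le> \<kappa> * \<rho>\<^sup>2" using kap by simp
      then show "\<kappa> * c\<^sup>2 \<le> L + e" using \<rho>2 by simp
    qed
    then show ?thesis unfolding L_def by simp
  qed
  define a where "a = D2f x d d + D2g x d d \<bullet> l"
  define b where "b = 2 * \<kappa> * c\<^sup>2"
  have sup: "support_fun ((\<lambda>w. Dg x w + D2g x d d) ` second_tangent_set Phi x d) l \<le> ereal (a - b)"
    unfolding support_fun_def
  proof (rule SUP_least)
    fix u assume "u \<in> (\<lambda>w. Dg x w + D2g x d d) ` second_tangent_set Phi x d"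
    then obtain w where u: "u = Dg x w + D2g x d d" and w: "w \<in> second_tangent_set Phi x d" by blast
    have "l \<bullet> u = - Df x w + D2g x d d \<bullet> l" using lagw u by (simp add: inner_add_right inner_commute)
    then show "ereal (l \<bullet> u) \<le> ereal (a - b)" using claim[OF w] by (simp add: a_def b_def)
  qed
  show "ereal (D2f x d d + D2g x d d \<bullet> l)
             - support_fun ((\<lambda>w. Dg x w + D2g x d d) ` second_tangent_set Phi x d) l
           \<ge> ereal (2 * \<kappa> * (infdist d (tangent_cone S x))\<^sup>2)"
    using sup unfolding a_def[symmetric] c_def[symmetric] b_def[symmetric]
    by (cases "support_fun ((\<lambda>w. Dg x w + D2g x d d) ` second_tangent_set Phi x d) l") auto
qed

end
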